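(* Let $(\mathcal{F}_\alpha)_{\alpha<\omega_1}$ and $(\mathcal{G}_\alpha)_{\alpha<\omega_1}$ be transfinite families defined by two (possibly different) approximating families. Then for every $\alpha<\omega_1$ and every infinite $N\subset\mathbb{N}$ there is an infinite $M\subset N$ such that $\mathcal{G}_\alpha^M\subset\mathcal{F}_\alpha$.
   Context: An approximating family assigns to each countable limit ordinal $\alpha$ finite sets $A_n(\alpha)\subset[0,\alpha)$, $n\in\mathbb{N}$, with $A_n(\alpha)\subset A_{n+1}(\alpha)$ and $\lim_n\max A_n(\alpha)=\alpha$. The associated transfinite family $(\mathcal{F}_\alpha)$ of sets of finite subsets of $\mathbb{N}$: $\mathcal{F}_0=\{\emptyset\}$; $\mathcal{F}_{\beta+1}=\{\{n\}\cup E:n\in\mathbb{N},E\in\mathcal{F}_\beta\}\cup\{\emptyset\}$; for limit $\alpha$, $\mathcal{F}_\alpha=\{\emptyset\}\cup\{E\ne\emptyset:E\in\bigcup_{\beta\in A_{\min E}(\alpha)}\mathcal{F}_\beta\}$. For $M=\{m_1<m_2<\dots\}$ and a set $\mathcal{A}$ of finite subsets of $\mathbb{N}$, $\mathcal{A}^M=\{\{m_i:i\in E\}:E\in\mathcal{A}\}$. *)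

theory Defs
  imports Main "HOL-Library.Infinite_Set" "HOL-Library.Countable_Set"
begin

text \<open>Countable ordinals are modelled by the elements of a well-ordered type 'a
  in which every element has only countably many predecessors (i.e. 'a is,
  up to order isomorphism, an initial segment of omega_1).\<close>

definition is_zero :: "'a::wellorder \<Rightarrow> bool" where
  "is_zero \<alpha> \<longleftrightarrow> (\<forall>\<beta>. \<alpha> \<le> \<beta>)"

definition is_succ_of :: "'a::wellorder \<Rightarrow> 'a \<Rightarrow> bool" where
  "is_succ_of \<beta> \<alpha> \<longleftrightarrow> \<beta> < \<alpha> \<and> (\<forall>\<gamma>. \<beta> < \<gamma> \<longrightarrow> \<alpha> \<le> \<gamma>)"

definition is_limit :: "'a::wellorder \<Rightarrow> bool" where
  "is_limit \<alpha> \<longleftrightarrow> \<not> is_zero \<alpha> \<and> \<not> (\<exists>\<beta>. is_succ_of \<beta> \<alpha>)"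

definition approx_family :: "('a::wellorder \<Rightarrow> nat \<Rightarrow> 'a set) \<Rightarrow> bool" where
  "approx_family A \<longleftrightarrow>
     (\<forall>\<alpha>. is_limit \<alpha> \<longrightarrow>
        (\<forall>n. finite (A \<alpha> n) \<and> A \<alpha> n \<subseteq> {..<\<alpha>} \<and> A \<alpha> n \<subseteq> A \<alpha> (Suc n)) \<and>
        (\<forall>\<gamma><\<alpha>. \<exists>n. \<exists>\<beta>\<in>A \<alpha> n. \<gamma> < \<beta>))"

definition tfam_step ::
  "('a::wellorder \<Rightarrow> nat \<Rightarrow> 'a set) \<Rightarrow> ('a \<Rightarrow> nat set set) \<Rightarrow> 'a \<Rightarrow> nat set set" where
  "tfam_step A rec \<alpha> =
     (if is_zero \<alpha> then {{}}
      else if (\<exists>\<beta>. is_succ_of \<beta> \<alpha>)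
        then {insert n E | n E. E \<in> rec (THE \<beta>. is_succ_of \<beta> \<alpha>)} \<union> {{}}
      else {{}} \<union> {E. E \<noteq> {} \<and> (\<exists>\<beta>\<in>A \<alpha> (Min E). E \<in> rec \<beta>)})"

definition tfam :: "('a::wellorder \<Rightarrow> nat \<Rightarrow> 'a set) \<Rightarrow> 'a \<Rightarrow> nat set set" where
  "tfam A = wfrec {(x, y). x < y} (tfam_step A)"

text \<open>A^M = {{m_i : i \<in> E} : E \<in> A}, with m_0 < m_1 < ... the increasing
  enumeration of M (indices start at 0, as does nat).\<close>
definition restr_fam :: "nat set set \<Rightarrow> nat set \<Rightarrow> nat set set" where
  "restr_fam \<A> M = {enumerate M ` E | E. E \<in> \<A>}"

end

theory Submission imports Defs begin

lemma tfam_unfold: "tfam A a = tfam_step A (cut (tfam A) {(x, y). x < y} a) a"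
  unfolding tfam_def by (rule wfrec[OF wf])

lemma succ_unique: "is_succ_of b a \<Longrightarrow> is_succ_of c a \<Longrightarrow> b = c"
  unfolding is_succ_of_def by (metis leD linorder_neqE)

lemma succ_the: "is_succ_of b a \<Longrightarrow> (THE x. is_succ_of x a) = b"
  using succ_unique by blast

lemma tfam_zero: "is_zero a \<Longrightarrow> tfam A a = {{}}"
  by (subst tfam_unfold) (simp add: tfam_step_def)

lemma tfam_succ: "is_succ_of b a \<Longrightarrow> tfam A a = {insert n E | n E. E \<in> tfam A b} \<union> {{}}"
proof -
  assume h: "is_succ_of b a"
  hence nz: "\<not> is_zero a" unfolding is_zero_def is_succ_of_def by (meson leD)
  have lt: "b < a" using h unfolding is_succ_of_def by simp
  show ?thesis
    apply (subst tfam_unfold)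
    using h nz lt by (auto simp add: tfam_step_def succ_the cut_apply)
qed

lemma tfam_limit:
  assumes "approx_family A" "is_limit a"
  shows "tfam A a = {{}} \<union> {E. E \<noteq> {} \<and> (\<exists>b\<in>A a (Min E). E \<in> tfam A b)}"
proof -
  have sub: "\<And>n. A a n \<subseteq> {..<a}" using assms unfolding approx_family_def by blast
  have "tfam A a = tfam_step A (cut (tfam A) {(x, y). x < y} a) a" by (rule tfam_unfold)
  also have "\<dots> = {{}} \<union> {E. E \<noteq> {} \<and> (\<exists>b\<in>A a (Min E). E \<in> cut (tfam A) {(x, y). x < y} a b)}"
    using assms(2) unfolding tfam_step_def is_limit_def by simp
  also have "\<dots> = {{}} \<union> {E. E \<noteq> {} \<and> (\<exists>b\<in>A a (Min E). E \<in> tfam A b)}"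
    using sub by (auto simp: cut_apply) (metis cut_apply case_prodI lessThan_iff mem_Collect_eq subsetD)+
  finally show ?thesis .
qed

lemma approx_mono:
  assumes "approx_family A" "is_limit a" "m \<le> n" shows "A a m \<subseteq> A a n"
proof -
  have "\<And>k. A a k \<subseteq> A a (Suc k)" using assms unfolding approx_family_def by blast
  thus ?thesis using lift_Suc_mono_le[of "A a"] assms(3) by blast
qed

lemma approx_sub: "approx_family A \<Longrightarrow> is_limit a \<Longrightarrow> x \<in> A a n \<Longrightarrow> x < a"
  unfolding approx_family_def by blast

lemma approx_cof: "approx_family A \<Longrightarrow> is_limit a \<Longrightarrow> c < a \<Longrightarrow> \<exists>n. \<exists>x\<in>A a n. c < x"
  unfolding approx_family_def by blast

lemma approx_fin: "approx_family A \<Longrightarrow> is_limit a \<Longrightarrow> finite (A a n)"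
  unfolding approx_family_def by blast

lemma ord_cases:
  obtains "is_zero (a::'a::wellorder)" | b where "is_succ_of b a" | "is_limit a"
  unfolding is_limit_def by blast

lemma tfam_finite:
  assumes "approx_family A" shows "E \<in> tfam A a \<Longrightarrow> finite E"
proof (induction a arbitrary: E rule: less_induct)
  case (less a)
  show ?case
  proof (cases a rule: ord_cases)
    case 1 then show ?thesis using less.prems by (simp add: tfam_zero)
  next
    case (2 b)
    hence "b < a" unfolding is_succ_of_def by simp
    then show ?thesis using less 2 by (auto simp: tfam_succ)
  next
    case 3
    have sub: "\<And>n. A a n \<subseteq> {..<a}" using assms 3 unfolding approx_family_def by blast
    show ?thesis using less.prems 3 less.IH sub by (auto simp: tfam_limit[OF assms]) 
  qed
qed

lemma tail_lemma:
  assumes "approx_family A"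
  shows "b < g \<Longrightarrow> \<exists>n. \<forall>E\<in>tfam A b. E \<noteq> {} \<and> n \<le> Min E \<longrightarrow> E \<in> tfam A g"
proof (induction g arbitrary: b rule: less_induct)
  case (less g)
  show ?case
  proof (cases g rule: ord_cases)
    case 1 then show ?thesis using less.prems unfolding is_zero_def by (meson leD)
  next
    case (2 d)
    have ins: "E \<noteq> {} \<Longrightarrow> finite E \<Longrightarrow> E \<in> tfam A d \<Longrightarrow> E \<in> tfam A g" for E
    proof -
      assume h: "E \<noteq> {}" "finite E" "E \<in> tfam A d"
      have "E = insert (Min E) E" using h Min_in by (simp add: insert_absorb)
      then show ?thesis using 2 h by (auto simp: tfam_succ)
    qed
    have "b \<le> d" using 2 less.prems unfolding is_succ_of_def by (meson leD leI)
    show ?thesis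
    proof (cases "b = d")
      case True then show ?thesis using ins tfam_finite[OF assms] by blast
    next
      case False
      hence "b < d" using \<open>b \<le> d\<close> by simp
      moreover have "d < g" using 2 unfolding is_succ_of_def by simp
      ultimately obtain n where "\<forall>E\<in>tfam A b. E \<noteq> {} \<and> n \<le> Min E \<longrightarrow> E \<in> tfam A d"
        using less.IH by blast
      then show ?thesis using ins tfam_finite[OF assms] by blast
    qed
  next
    case 3
    obtain m d where md: "d \<in> A g m" "b < d" using approx_cof[OF assms 3 less.prems] by blast
    have "d < g" using approx_sub[OF assms 3 md(1)] .
    then obtain n where n: "\<forall>E\<in>tfam A b. E \<noteq> {} \<and> n \<le> Min E \<longrightarrow> E \<in> tfam A d"
      using less.IH[OF \<open>d < g\<close> md(2)] by blast
    show ?thesis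
    proof (intro exI[of _ "max n m"] ballI impI)
      fix E assume E: "E \<in> tfam A b" "E \<noteq> {} \<and> max n m \<le> Min E"
      have "m \<le> Min E" using E(2) by simp
      have "d \<in> A g (Min E)" using approx_mono[OF assms 3 \<open>m \<le> Min E\<close>] md(1) by (rule subsetD)
      have "n \<le> Min E" using E(2) by simp
      moreover have "E \<noteq> {}" using E(2) by simp
      ultimately have "E \<in> tfam A d" using n E(1) by blast
      moreover note \<open>d \<in> A g (Min E)\<close>
      ultimately have "E \<in> {E. E \<noteq> {} \<and> (\<exists>b\<in>A g (Min E). E \<in> tfam A b)}" using E(2) by blast
      then show "E \<in> tfam A g" by (subst tfam_limit[OF assms 3]) (rule UnI2)
    qed
  qed
qed

definition Good :: "nat set set \<Rightarrow> nat set set \<Rightarrow> nat set \<Rightarrow> bool" where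
  "Good G F M \<longleftrightarrow> (\<forall>E\<in>G. \<forall>f::nat\<Rightarrow>nat. strict_mono f \<and> range f \<subseteq> M \<longrightarrow> f ` E \<in> F)"

lemma Good_sub: "Good G F M \<Longrightarrow> M' \<subseteq> M \<Longrightarrow> Good G F M'"
  unfolding Good_def by blast

lemma Good_restr: "Good G F M \<Longrightarrow> infinite M \<Longrightarrow> restr_fam G M \<subseteq> F"
proof
  fix X assume G: "Good G F M" "infinite M" and X: "X \<in> restr_fam G M"
  then obtain E where E: "E \<in> G" "X = enumerate M ` E" unfolding restr_fam_def by blast
  have "strict_mono (enumerate M)" using strict_mono_enumerate[OF G(2)] .
  moreover have "range (enumerate M) \<subseteq> M" using enumerate_in_set[OF G(2)] by blast
  ultimately show "X \<in> F" using G(1) E unfolding Good_def by blast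
qed

lemma Good_finite_set:
  assumes "finite S" "\<forall>b\<in>S. \<forall>N. infinite N \<longrightarrow> (\<exists>M\<subseteq>N. infinite M \<and> Good (G b) (F b) M)"
  shows "infinite N \<Longrightarrow> \<exists>M\<subseteq>N. infinite M \<and> (\<forall>b\<in>S. Good (G b) (F b) M)"
  using assms
proof (induction S arbitrary: N rule: finite_induct)
  case empty then show ?case by blast
next
  case (insert x S)
  obtain M1 where M1: "M1 \<subseteq> N" "infinite M1" "Good (G x) (F x) M1"
    using insert.prems(2) insert.prems(1) by blast
  obtain M2 where M2: "M2 \<subseteq> M1" "infinite M2" "\<forall>b\<in>S. Good (G b) (F b) M2"
    using insert.IH[OF M1(2)] insert.prems(2) by blast
  have "Good (G x) (F x) M2" using Good_sub[OF M1(3) M2(1)] .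
  then show ?case using M1(1) M2 by (intro exI[of _ M2]) auto
qed

lemma finite_bound:
  assumes "finite S" "\<forall>b\<in>S. \<exists>L::nat. \<forall>L'\<ge>L. P b L'"
  shows "\<exists>L. \<forall>b\<in>S. \<forall>L'\<ge>L. P b L'"
  using assms
proof (induction S rule: finite_induct)
  case empty then show ?case by blast
next
  case (insert x S)
  then obtain L1 L2 where "\<forall>L'\<ge>L1. P x L'" "\<forall>b\<in>S. \<forall>L'\<ge>L2. P b L'" by blast
  then show ?case by (intro exI[of _ "max L1 L2"]) auto
qed

fun pick :: "(nat \<Rightarrow> nat set) \<Rightarrow> (nat \<Rightarrow> nat) \<Rightarrow> nat \<Rightarrow> nat" where
  "pick Ms b 0 = (SOME x. x \<in> Ms 0 \<and> b 0 \<le> x)"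
| "pick Ms b (Suc k) = (SOME x. x \<in> Ms (Suc k) \<and> max (b (Suc k)) (Suc (pick Ms b k)) \<le> x)"

lemma pick_props:
  assumes "\<And>k. infinite (Ms k)"
  shows "pick Ms b k \<in> Ms k \<and> b k \<le> pick Ms b k \<and> (k > 0 \<longrightarrow> pick Ms b (k - 1) < pick Ms b k)"
proof (cases k)
  case 0
  have "\<exists>x. x \<in> Ms 0 \<and> b 0 \<le> x" using assms[of 0] by (simp add: infinite_nat_iff_unbounded_le) blast
  then show ?thesis using 0 by (auto intro: someI2_ex)
next
  case (Suc j)
  have "\<exists>x. x \<in> Ms (Suc j) \<and> max (b (Suc j)) (Suc (pick Ms b j)) \<le> x"
    using assms[of "Suc j"] by (simp add: infinite_nat_iff_unbounded_le) (meson max.bounded_iff)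
  then have "pick Ms b (Suc j) \<in> Ms (Suc j) \<and> max (b (Suc j)) (Suc (pick Ms b j)) \<le> pick Ms b (Suc j)"
    by (simp del: max.bounded_iff) (rule someI_ex)
  then show ?thesis using Suc by auto
qed

lemma diag:
  fixes Ms :: "nat \<Rightarrow> nat set" and b :: "nat \<Rightarrow> nat"
  assumes "\<And>k. infinite (Ms k)"
  obtains m where "strict_mono m" "\<And>k. m k \<in> Ms k" "\<And>k. b k \<le> m k"
proof
  show "strict_mono (pick Ms b)" unfolding strict_mono_Suc_iff
  proof
    fix k show "pick Ms b k < pick Ms b (Suc k)" using pick_props[where Ms=Ms and b=b and k="Suc k", OF assms] by simp
  qed
  show "pick Ms b k \<in> Ms k" for k using pick_props[where Ms=Ms and b=b and k=k, OF assms] by simp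
  show "b k \<le> pick Ms b k" for k using pick_props[where Ms=Ms and b=b and k=k, OF assms] by simp
qed

lemma ge_diag: "strict_mono (m::nat\<Rightarrow>nat) \<Longrightarrow> strict_mono f \<Longrightarrow> range f \<subseteq> range m \<Longrightarrow> m i \<le> f i"
proof (induction i)
  case 0
  then obtain j where "f 0 = m j" by blast
  then show ?case using monoD[OF strict_mono_mono[OF 0(1)], of 0 j] by simp
next
  case (Suc i)
  then obtain j where j: "f (Suc i) = m j" by blast
  have "f i < f (Suc i)" using Suc.prems strict_mono_Suc_iff by blast
  hence "m i < m j" using Suc j by simp
  hence "i < j" by (metis Suc.prems(1) strict_mono_less)
  hence "Suc i \<le> j" by simp
  have "m (Suc i) \<le> m j" by (rule monoD[OF strict_mono_mono[OF Suc.prems(1)] \<open>Suc i \<le> j\<close>])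
  then show ?case using j by simp
qed

lemma main:
  assumes A: "approx_family A" and B: "approx_family B"
  shows "infinite N \<Longrightarrow> \<exists>M\<subseteq>N. infinite M \<and> Good (tfam B a) (tfam A a) M"
proof (induction a arbitrary: N rule: less_induct)
  case (less a)
  show ?case
  proof (cases a rule: ord_cases)
    case 1
    have "Good (tfam B a) (tfam A a) N" unfolding Good_def using 1 by (simp add: tfam_zero)
    then show ?thesis using less.prems by blast
  next
    case (2 b)
    have "b < a" using 2 unfolding is_succ_of_def by simp
    obtain M where M: "M \<subseteq> N" "infinite M" "Good (tfam B b) (tfam A b) M"
      using less.IH[OF \<open>b < a\<close> less.prems] by blast
    have "Good (tfam B a) (tfam A a) M" unfolding Good_def
    proof (intro ballI allI impI)
      fix E and f :: "nat \<Rightarrow> nat" assume E: "E \<in> tfam B a" and f: "strict_mono f \<and> range f \<subseteq> M"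
      show "f ` E \<in> tfam A a"
      proof (cases "E = {}")
        case True then show ?thesis using 2 by (simp add: tfam_succ)
      next
        case False
        then obtain n E' where E': "E = insert n E'" "E' \<in> tfam B b" using E 2 by (auto simp: tfam_succ)
        have "f ` E' \<in> tfam A b" using M(3) E'(2) f unfolding Good_def by blast
        then show ?thesis using E'(1) 2 by (auto simp: tfam_succ)
      qed
    qed
    then show ?thesis using M by blast
  next
    case 3
    define Ph where "Ph k N' = (SOME M. M \<subseteq> N' \<and> infinite M \<and> (\<forall>b\<in>B a k. Good (tfam B b) (tfam A b) M))"
      for k N'
    have Ph: "Ph k N' \<subseteq> N' \<and> infinite (Ph k N') \<and> (\<forall>b\<in>B a k. Good (tfam B b) (tfam A b) (Ph k N'))"
      if inf: "infinite N'" for k N'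
    proof -
      have "\<forall>b\<in>B a k. \<forall>N. infinite N \<longrightarrow> (\<exists>M\<subseteq>N. infinite M \<and> Good (tfam B b) (tfam A b) M)"
      proof (intro ballI allI impI)
        fix b N'' assume b: "b \<in> B a k" and N'': "infinite (N'' :: nat set)"
        show "\<exists>M\<subseteq>N''. infinite M \<and> Good (tfam B b) (tfam A b) M"
          by (rule less.IH[OF approx_sub[OF B 3 b] N''])
      qed
      then have "\<exists>M\<subseteq>N'. infinite M \<and> (\<forall>b\<in>B a k. Good (tfam B b) (tfam A b) M)"
        by (rule Good_finite_set[where G="tfam B" and F="tfam A", OF approx_fin[OF B 3] _ inf])
      then have "\<exists>M. M \<subseteq> N' \<and> infinite M \<and> (\<forall>b\<in>B a k. Good (tfam B b) (tfam A b) M)" by blast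
      then show ?thesis unfolding Ph_def by (rule someI_ex)
    qed
    define Ms where "Ms = rec_nat (Ph 0 N) (\<lambda>k M. Ph (Suc k) M)"
    have Ms0: "Ms 0 = Ph 0 N" and MsS: "\<And>k. Ms (Suc k) = Ph (Suc k) (Ms k)" by (simp_all add: Ms_def)
    have Msp: "infinite (Ms k) \<and> (\<forall>b\<in>B a k. Good (tfam B b) (tfam A b) (Ms k))" for k
    proof (induction k)
      case 0 then show ?case using Ph[OF less.prems] Ms0 by simp
    next
      case (Suc k) then show ?case using Ph[of "Ms k" "Suc k"] MsS by simp
    qed
    have MsSub: "Ms (Suc k) \<subseteq> Ms k" for k using Ph[of "Ms k" "Suc k"] MsS Msp by simp
    have MsN: "Ms 0 \<subseteq> N" using Ph[OF less.prems] Ms0 by simp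
    have Msdec: "k \<le> j \<Longrightarrow> Ms j \<subseteq> Ms k" for k j
      using lift_Suc_antimono_le[of Ms, OF MsSub] by blast
    have Lex: "\<exists>L. \<forall>b\<in>B a k. \<forall>L'\<ge>L. \<forall>E\<in>tfam A b. E \<noteq> {} \<and> L' \<le> Min E \<longrightarrow> E \<in> tfam A a" for k
    proof (rule finite_bound[OF approx_fin[OF B 3]], rule ballI)
      fix b assume "b \<in> B a k"
      then have "b < a" using approx_sub[OF B 3] by blast
      then obtain m d where md: "d \<in> A a m" "b < d" using approx_cof[OF A 3] by blast
      obtain n where n: "\<forall>E\<in>tfam A b. E \<noteq> {} \<and> n \<le> Min E \<longrightarrow> E \<in> tfam A d"
        using tail_lemma[OF A md(2)] by blast
      show "\<exists>L. \<forall>L'\<ge>L. \<forall>E\<in>tfam A b. E \<noteq> {} \<and> L' \<le> Min E \<longrightarrow> E \<in> tfam A a"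
      proof (intro exI[of _ "max n m"] allI impI ballI)
        fix L' E assume L': "max n m \<le> L'" and E: "E \<in> tfam A b" "E \<noteq> {} \<and> L' \<le> Min E"
        have "m \<le> Min E" using L' E(2) by simp
        have dd: "d \<in> A a (Min E)" using approx_mono[OF A 3 \<open>m \<le> Min E\<close>] md(1) by (rule subsetD)
        have "n \<le> Min E" using L' E(2) by simp
        moreover have "E \<noteq> {}" using E(2) by simp
        ultimately have "E \<in> tfam A d" using n E(1) by blast
        then have "E \<in> {E. E \<noteq> {} \<and> (\<exists>b\<in>A a (Min E). E \<in> tfam A b)}" using dd \<open>E \<noteq> {}\<close> by blast
        then show "E \<in> tfam A a" by (subst tfam_limit[OF A 3]) (rule UnI2)
      qed
    qed
    have "\<exists>L. \<forall>k. \<forall>b\<in>B a k. \<forall>L'\<ge>L k. \<forall>E\<in>tfam A b. E \<noteq> {} \<and> L' \<le> Min E \<longrightarrow> E \<in> tfam A a"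
      by (rule choice) (rule allI, rule Lex)
    then obtain L where L: "\<And>k. \<forall>b\<in>B a k. \<forall>L'\<ge>L k. \<forall>E\<in>tfam A b. E \<noteq> {} \<and> L' \<le> Min E \<longrightarrow> E \<in> tfam A a"
      by blast
    obtain m where m: "strict_mono m" "\<And>k. m k \<in> Ms k" "\<And>k. max (L k) (enumerate (Ms k) k) \<le> m k"
      using diag[of Ms "\<lambda>k. max (L k) (enumerate (Ms k) k)"] Msp by blast
    have MN: "range m \<subseteq> N" using m(2) Msdec[of 0] MsN by blast
    have Minf: "infinite (range m)"
      using strict_mono_imp_inj_on[OF m(1)] range_inj_infinite by blast
    have "Good (tfam B a) (tfam A a) (range m)" unfolding Good_def
    proof (intro ballI allI impI)
      fix E and f :: "nat \<Rightarrow> nat" assume E: "E \<in> tfam B a" and f: "strict_mono f \<and> range f \<subseteq> range m"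
      show "f ` E \<in> tfam A a"
      proof (cases "E = {}")
        case True then show ?thesis by (simp add: tfam_limit[OF A 3])
      next
        case False
        have finE: "finite E" using tfam_finite[OF B E] .
        define k where "k = Min E"
        obtain b where b: "b \<in> B a k" "E \<in> tfam B b"
          using E False unfolding tfam_limit[OF B 3] k_def by blast
        have kE: "\<And>i. i \<in> E \<Longrightarrow> k \<le> i" unfolding k_def using finE by simp
        have fge: "\<And>i. m i \<le> f i" using ge_diag[OF m(1)] f by blast
        have infk: "infinite (Ms k)" using Msp by blast
        define g where "g i = (if i < k then enumerate (Ms k) i else f i)" for i
        have fmono: "\<And>x y. x < y \<Longrightarrow> f x < f y" using f strict_mono_less by blast
        have gmono: "strict_mono g"
        proof (rule strict_monoI)
          fix x y :: nat assume xy: "x < y"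
          show "g x < g y"
          proof (cases "y < k")
            case True then show ?thesis using xy infk by (simp add: g_def enumerate_mono)
          next
            case False
            show ?thesis
            proof (cases "x < k")
              case True
              have "enumerate (Ms k) x < enumerate (Ms k) k" using True infk by (simp add: enumerate_mono)
              also have "\<dots> \<le> m k" using m(3)[of k] by simp
              also have "\<dots> \<le> f k" by (rule fge)
              also have "\<dots> \<le> f y" using False fmono by (metis le_less not_less)
              finally show ?thesis using True False by (simp add: g_def)
            next
              case False
              then show ?thesis using \<open>\<not> y < k\<close> xy fmono by (simp add: g_def)
            qed
          qed
        qed
        have grange: "range g \<subseteq> Ms k"
        proof
          fix y assume "y \<in> range g"
          then obtain i where i: "y = g i" by blast
          show "y \<in> Ms k"
          proof (cases "i < k")
            case True then show ?thesis using i infk by (simp add: g_def enumerate_in_set)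
          next
            case False
            then obtain j where j: "f i = m j" using f by blast
            have "m k \<le> f k" by (rule fge)
            also have "\<dots> \<le> f i" using False fmono by (metis le_less not_less)
            finally have "m k \<le> m j" using j by simp
            then have "k \<le> j" using strict_mono_less_eq[OF m(1)] by blast
            then show ?thesis using i False j m(2)[of j] Msdec[of k j] by (auto simp: g_def)
          qed
        qed
        have gE: "g ` E = f ` E" using kE by (auto simp: g_def leD)
        have "Good (tfam B b) (tfam A b) (Ms k)" using Msp b(1) by blast
        then have fEb: "f ` E \<in> tfam A b" using b(2) gmono grange gE unfolding Good_def by metis
        have minf: "Min (f ` E) = f k"
          unfolding k_def using mono_Min_commute[OF strict_mono_mono[of f] finE False] f by simp
        have "L k \<le> Min (f ` E)" using m(3)[of k] fge[of k] minf by simp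
        moreover have "f ` E \<noteq> {}" using False by simp
        ultimately have hyp: "f ` E \<noteq> {} \<and> L k \<le> Min (f ` E)" by simp
        have LL: "\<forall>L'\<ge>L k. \<forall>E\<in>tfam A b. E \<noteq> {} \<and> L' \<le> Min E \<longrightarrow> E \<in> tfam A a"
          using L[of k] b(1) by (rule bspec)
        show ?thesis using LL[rule_format, OF order_refl fEb hyp] .
      qed
    qed
    then show ?thesis using MN Minf by (intro exI[of _ "range m"] conjI)
  qed
qed

theorem proposition3p8:
  fixes A B :: "'a::wellorder \<Rightarrow> nat \<Rightarrow> 'a set" and \<alpha> :: 'a and N :: "nat set"
  assumes "\<forall>x::'a. countable {y. y < x}"
    and "approx_family A" and "approx_family B"
    and "infinite N"
  shows "\<exists>M. M \<subseteq> N \<and> infinite M \<and> restr_fam (tfam B \<alpha>) M \<subseteq> tfam A \<alpha>"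
proof -
  obtain M where "M \<subseteq> N" "infinite M" "Good (tfam B \<alpha>) (tfam A \<alpha>) M"
    using main[OF assms(2,3,4)] by blast
  then show ?thesis using Good_restr by blast
qed

end
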